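(* Let $(\mathcal{R},\mu)$ be resonant, let $\|\cdot\|_X$ be an r.i. quasi-Banach function norm on $\mathcal{M}(\mathcal{R},\mu)$, and let $\|\cdot\|_{\overline{X}}$ be the r.i. quasi-Banach function norm on $\mathcal{M}([0,\infty),\lambda)$ constructed as in the context. Then the Hardy–Littlewood–Pólya principle holds for $\|\cdot\|_X$ if and only if it holds for $\|\cdot\|_{\overline{X}}$.
   Context: Let $(\mathcal{R},\mu)$ be a $\sigma$-finite measure space; $\mathcal{M}$ denotes the $\mu$-measurable extended complex-valued functions (identified a.e.), $\mathcal{M}_+$ the non-negative ones. $f_*(s)=\mu(\{|f|>s\})$, $f^*(t)=\inf\{s\ge0;\,f_*(s)\le t\}$ (non-increasing rearrangement). $(\mathcal{R},\mu)$ is called resonant if it is either non-atomic or completely atomic with all atoms of equal measure. A quasi-Banach function norm is a map $\|\cdot\|:\mathcal{M}\to[0,\infty]$ with $\|f\|=\||f|\|$ such that on $\mathcal{M}_+$: (Q1) $\|af\|=|a|\|f\|$, $\|f\|=0\iff f=0$ a.e., and there is $C\ge1$ (modulus of concavity) with $\|f+g\|\le C(\|f\|+\|g\|)$; (P2) $f\le g$ a.e. implies $\|f\|\le\|g\|$; (P3) $f_n\uparrow f$ a.e. implies $\|f_n\|\uparrow\|f\|$; (P4) $\|\chi_E\|<\infty$ whenever $\mu(E)<\infty$. The norm is rearrangement-invariant (r.i.) if $\|f\|=\|g\|$ whenever $f^*=g^*$. Hardy–Littlewood–Pólya relation: $f\prec g$ means $\int_0^t f^*\,d\lambda\le\int_0^t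 g^*\,d\lambda$ for all $t\in(0,\infty)$. The Hardy–Littlewood–Pólya principle holds for an r.i. quasi-Banach function norm $\|\cdot\|$ if $\|f\|\le\|g\|$ whenever $f\prec g$. Construction of $\|\cdot\|_{\overline{X}}$: (i) If $(\mathcal{R},\mu)$ is non-atomic, fix a measure-preserving map $\sigma$ from $(\mathcal{R},\mu)$ onto $[0,\mu(\mathcal{R}))$ (with Lebesgue measure $\lambda$), and for $h\in\mathcal{M}([0,\mu(\mathcal{R})),\lambda)$ put $\|h\|_{\overline{X_0}}=\|h\circ\sigma\|_X$. (ii) If $(\mathcal{R},\mu)$ is completely atomic with all atoms of measure $\beta\in(0,\infty)$, fix an enumeration $(e_n)_{n\in\mathcal{N}}$ of the atoms, $\mathcal{N}=\{n\in\mathbb{N};\,\beta n<\mu(\mathcal{R})\}$ ($0\in\mathbb{N}$), define $T(h)(e_n)=\beta^{-1}\int_{\beta n}^{\beta(n+1)}h^*\,d\lambda$ for $n\in\mathcal{N}$, and put $\|h\|_{\overline{X_0}}=\|T(h)\|_X$. In both cases define, for $f\in\mathcal{M}([0,\infty),\lambda)$, $\|f\|_{\overline{X}}=\|f^*\chi_{[0,\mu(\mathcal{R}))}\|_{\overline{X_0}}$. (This is an r.i. quasi-Banach function norm with $\|f\|_X=\|f^*\|_{\overline{X}}$ for $f\in\mathcal{M}(\mathcal{R},\mu)$.) *)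

theory Defs
  imports "HOL-Analysis.Analysis"
begin

text \<open>Functions are represented through their moduli: a (quasi-)norm is a functional on
  non-negative extended-real valued functions (type ennreal); only its values on measurable
  functions matter.\<close>

definition atom :: "'a measure \<Rightarrow> 'a set \<Rightarrow> bool" where
  "atom M A \<longleftrightarrow> A \<in> sets M \<and> 0 < emeasure M A \<and>
     (\<forall>B\<in>sets M. B \<subseteq> A \<longrightarrow> emeasure M B = 0 \<or> emeasure M (A - B) = 0)"

definition non_atomic :: "'a measure \<Rightarrow> bool" where
  "non_atomic M \<longleftrightarrow> (\<forall>A. \<not> atom M A)"

definition completely_atomic :: "'a measure \<Rightarrow> bool" where
  "completely_atomic M \<longleftrightarrow>
     (\<forall>A\<in>sets M. 0 < emeasure M A \<longrightarrow> (\<exists>B. B \<subseteq> A \<and> atom M B))"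

definition resonant :: "'a measure \<Rightarrow> bool" where
  "resonant M \<longleftrightarrow> non_atomic M \<or>
     (completely_atomic M \<and> (\<exists>\<beta>. \<forall>A. atom M A \<longrightarrow> emeasure M A = \<beta>))"

definition rearr :: "'a measure \<Rightarrow> ('a \<Rightarrow> ennreal) \<Rightarrow> real \<Rightarrow> ennreal" where
  "rearr M f t = Inf {s. emeasure M {x \<in> space M. s < f x} \<le> ennreal t}"

definition qbfn :: "'a measure \<Rightarrow> (('a \<Rightarrow> ennreal) \<Rightarrow> ennreal) \<Rightarrow> bool" where
  "qbfn M X \<longleftrightarrow>
     (\<forall>f\<in>borel_measurable M. \<forall>a::real. a \<ge> 0 \<longrightarrow>
         X (\<lambda>x. ennreal a * f x) = ennreal a * X f) \<and>
     (\<forall>f\<in>borel_measurable M. X f = 0 \<longleftrightarrow> (AE x in M. f x = 0)) \<and>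
     (\<exists>C::real. C \<ge> 1 \<and> (\<forall>f\<in>borel_measurable M. \<forall>g\<in>borel_measurable M.
         X (\<lambda>x. f x + g x) \<le> ennreal C * (X f + X g))) \<and>
     (\<forall>f\<in>borel_measurable M. \<forall>g\<in>borel_measurable M.
         (AE x in M. f x \<le> g x) \<longrightarrow> X f \<le> X g) \<and>
     (\<forall>F f. (\<forall>n. F n \<in> borel_measurable M) \<longrightarrow> f \<in> borel_measurable M \<longrightarrow>
         (AE x in M. incseq (\<lambda>n. F n x) \<and> (\<lambda>n. F n x) \<longlonglongrightarrow> f x) \<longrightarrow>
         (\<lambda>n. X (F n)) \<longlonglongrightarrow> X f) \<and>
     (\<forall>E\<in>sets M. emeasure M E < \<infinity> \<longrightarrow> X (indicator E) < \<infinity>)"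

definition rearrangement_invariant :: "'a measure \<Rightarrow> (('a \<Rightarrow> ennreal) \<Rightarrow> ennreal) \<Rightarrow> bool" where
  "rearrangement_invariant M X \<longleftrightarrow>
     (\<forall>f\<in>borel_measurable M. \<forall>g\<in>borel_measurable M.
        (\<forall>t\<ge>0. rearr M f t = rearr M g t) \<longrightarrow> X f = X g)"

definition ri_qbfn :: "'a measure \<Rightarrow> (('a \<Rightarrow> ennreal) \<Rightarrow> ennreal) \<Rightarrow> bool" where
  "ri_qbfn M X \<longleftrightarrow> qbfn M X \<and> rearrangement_invariant M X"

definition hlp_rel :: "'a measure \<Rightarrow> ('a \<Rightarrow> ennreal) \<Rightarrow> ('a \<Rightarrow> ennreal) \<Rightarrow> bool" where
  "hlp_rel M f g \<longleftrightarrow> (\<forall>t>0.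
     (\<integral>\<^sup>+ s\<in>{0..t}. rearr M f s \<partial>lborel) \<le> (\<integral>\<^sup>+ s\<in>{0..t}. rearr M g s \<partial>lborel))"

definition HLP_principle :: "'a measure \<Rightarrow> (('a \<Rightarrow> ennreal) \<Rightarrow> ennreal) \<Rightarrow> bool" where
  "HLP_principle M X \<longleftrightarrow>
     (\<forall>f\<in>borel_measurable M. \<forall>g\<in>borel_measurable M. hlp_rel M f g \<longrightarrow> X f \<le> X g)"

definition Ival :: "'a measure \<Rightarrow> real set" where
  "Ival M = {t. 0 \<le> t \<and> ennreal t < emeasure M (space M)}"

definition Nset :: "'a measure \<Rightarrow> real \<Rightarrow> nat set" where
  "Nset M \<beta> = {n. ennreal (\<beta> * real n) < emeasure M (space M)}"

definition atom_enum :: "'a measure \<Rightarrow> real \<Rightarrow> (nat \<Rightarrow> 'a set) \<Rightarrow> bool" where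
  "atom_enum M \<beta> e \<longleftrightarrow> (\<forall>n\<in>Nset M \<beta>. atom M (e n)) \<and> disjoint_family_on e (Nset M \<beta>) \<and>
     emeasure M (space M - (\<Union>n\<in>Nset M \<beta>. e n)) = 0"

definition Tatom :: "'a measure \<Rightarrow> real \<Rightarrow> (nat \<Rightarrow> 'a set) \<Rightarrow> (real \<Rightarrow> ennreal) \<Rightarrow> 'a \<Rightarrow> ennreal" where
  "Tatom M \<beta> e h x = (\<Sum>n. (if n \<in> Nset M \<beta> then indicator (e n) x *
      (ennreal (1 / \<beta>) * (\<integral>\<^sup>+ t\<in>{\<beta> * real n..\<beta> * real (n + 1)}.
          rearr (lebesgue_on (Ival M)) h t \<partial>lborel)) else 0))"

text \<open>Xb is the functional on M([0,\<infinity>),\<lambda>) obtained from X by the construction, for some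
  admissible choice of the measure-preserving map sigma (non-atomic case) or of the
  enumeration of atoms (completely atomic case).\<close>
definition is_Xbar :: "'a measure \<Rightarrow> (('a \<Rightarrow> ennreal) \<Rightarrow> ennreal) \<Rightarrow> ((real \<Rightarrow> ennreal) \<Rightarrow> ennreal) \<Rightarrow> bool" where
  "is_Xbar M X Xb \<longleftrightarrow>
     (non_atomic M \<and>
       (\<exists>\<sigma>. \<sigma> \<in> measurable M (restrict_space lborel (Ival M)) \<and>
            distr M (restrict_space lborel (Ival M)) \<sigma> = restrict_space lborel (Ival M) \<and>
            Xb = (\<lambda>f. X ((\<lambda>t. rearr (lebesgue_on {0..}) f t * indicator (Ival M) t) \<circ> \<sigma>))))
   \<or> (completely_atomic M \<and>
       (\<exists>\<beta>::real. 0 < \<beta> \<and> (\<forall>A. atom M A \<longrightarrow> emeasure M A = ennreal \<beta>) \<and>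
          (\<exists>e. atom_enum M \<beta> e \<and>
            Xb = (\<lambda>f. X (Tatom M \<beta> e (\<lambda>t. rearr (lebesgue_on {0..}) f t * indicator (Ival M) t))))))"

end

theory Submission
  imports Defs
begin


definition dst :: "'a measure \<Rightarrow> ('a \<Rightarrow> ennreal) \<Rightarrow> ennreal \<Rightarrow> ennreal" where
  "dst M f s = emeasure M {x\<in>space M. s < f x}"

lemma rearr_dst: "rearr M f t = Inf {s. dst M f s \<le> ennreal t}"
  by (simp add: rearr_def dst_def)

lemma rearr_cong_dst: "dst M f = dst N g \<Longrightarrow> rearr M f = rearr N g"
  by (simp add: rearr_dst fun_eq_iff)

lemma ennreal_eq_by_gt:
  fixes a b :: ennreal
  assumes "\<And>s. s < a \<longleftrightarrow> s < b" shows "a = b"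
  by (metis assms linorder_neqE order_less_irrefl)

lemma dst_antimono: "s \<le> s' \<Longrightarrow> f \<in> borel_measurable M \<Longrightarrow> dst M f s' \<le> dst M f s"
  unfolding dst_def by (rule emeasure_mono) auto

lemma dst_Inf_le:
  assumes f: "f \<in> borel_measurable M"
  shows "dst M f (Inf {s. dst M f s \<le> ennreal t}) \<le> ennreal t"
proof -
  let ?S = "{s. dst M f s \<le> ennreal t}"
  have top: "dst M f top = 0" unfolding dst_def by simp
  hence ne: "?S \<noteq> {}" by (metis (mono_tags, lifting) empty_iff mem_Collect_eq zero_le)
  obtain u where u: "\<And>n. u n \<in> ?S" "u \<longlonglongrightarrow> Inf ?S"
    using Inf_as_limit[OF ne] by blast
  define v where "v n = Min (u ` {..n})" for n
  have vS: "v n \<in> ?S" for n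
  proof -
    have "v n \<in> u ` {..n}" unfolding v_def by (intro Min_in) auto
    then show ?thesis using u(1) by auto
  qed
  have vle: "v n \<le> u n" for n unfolding v_def by (intro Min_le) auto
  have vdec: "v (Suc n) \<le> v n" for n unfolding v_def
    by (intro Min_antimono) auto
  have "{x\<in>space M. Inf ?S < f x} \<subseteq> (\<Union>n. {x\<in>space M. v n < f x})"
  proof
    fix x assume x: "x \<in> {x\<in>space M. Inf ?S < f x}"
    then have "eventually (\<lambda>n. u n < f x) sequentially"
      using u(2) by (simp add: order_tendstoD(2))
    then obtain n where "u n < f x" by (meson eventually_sequentially order_refl)
    with vle[of n] x show "x \<in> (\<Union>n. {x\<in>space M. v n < f x})" by (auto intro: le_less_trans)
  qed
  hence "dst M f (Inf ?S) \<le> emeasure M (\<Union>n. {x\<in>space M. v n < f x})"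
    unfolding dst_def by (intro emeasure_mono) (use f in auto)
  also have "\<dots> = (SUP n. emeasure M {x\<in>space M. v n < f x})"
    by (rule SUP_emeasure_incseq[symmetric]) (use f vdec in \<open>auto simp: incseq_Suc_iff intro: le_less_trans\<close>)
  also have "\<dots> \<le> ennreal t"
    using vS by (auto simp: dst_def intro!: SUP_least)
  finally show ?thesis .
qed

lemma rearr_gt:
  assumes f: "f \<in> borel_measurable M"
  shows "s < rearr M f t \<longleftrightarrow> ennreal t < dst M f s"
proof
  assume "s < rearr M f t"
  then show "ennreal t < dst M f s"
    unfolding rearr_dst by (metis (mono_tags, lifting) Inf_lower mem_Collect_eq not_le leD)
next
  assume a: "ennreal t < dst M f s"
  show "s < rearr M f t"
  proof (rule ccontr)
    assume "\<not> s < rearr M f t"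
    hence "rearr M f t \<le> s" by simp
    hence "dst M f s \<le> dst M f (rearr M f t)" using dst_antimono f by blast
    also have "\<dots> \<le> ennreal t" unfolding rearr_dst by (rule dst_Inf_le[OF f])
    finally show False using a by simp
  qed
qed

lemma ennreal_less_set_eq:
  "{t::real. 0 \<le> t \<and> ennreal t < c} = (if c = \<infinity> then {0..} else {0..<enn2real c})"
  by (cases c) (auto simp: ennreal_less_iff)

lemma ennreal_less_set_borel[measurable]: "{t::real. 0 \<le> t \<and> ennreal t < c} \<in> sets borel"
  by (simp add: ennreal_less_set_eq)

lemma emeasure_lborel_Ici_infty: "emeasure lborel {0::real..} = \<infinity>"
proof -
  have "ennreal (real n) \<le> emeasure lborel {0::real..}" for n
  proof -
    have "ennreal (real n) = emeasure lborel {0::real..<real n}" by simp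
    also have "\<dots> \<le> emeasure lborel {0::real..}" by (intro emeasure_mono) auto
    finally show ?thesis .
  qed
  show ?thesis
  proof (rule ccontr)
    assume "emeasure lborel {0::real..} \<noteq> \<infinity>"
    then obtain r where r: "emeasure lborel {0::real..} = ennreal r" "0 \<le> r"
      by (cases "emeasure lborel {0::real..}") auto
    obtain n :: nat where "r < real n" using reals_Archimedean2 by blast
    moreover have "real n \<le> r" using r \<open>\<And>n. ennreal (real n) \<le> _\<close>[of n] by (simp add: ennreal_le_iff)
    ultimately show False by simp
  qed
qed

lemma emeasure_lborel_ennreal_less: "emeasure lborel {t::real. 0 \<le> t \<and> ennreal t < c} = c"
proof (cases "c = \<infinity>")
  case True
  have "{t::real. 0 \<le> t \<and> ennreal t < c} = {0..}" using True by auto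
  then show ?thesis using True emeasure_lborel_Ici_infty by simp
next
  case False
  then show ?thesis by (cases c) (auto simp: ennreal_less_set_eq)
qed

lemma rearr_borel[measurable]:
  assumes f: "f \<in> borel_measurable M"
  shows "rearr M f \<in> borel_measurable borel"
proof (rule borel_measurableI_greater)
  fix y
  have "{x \<in> space borel. y < rearr M f x} = {x. ennreal x < dst M f y}"
    using rearr_gt[OF f] by auto
  also have "\<dots> \<in> sets borel" by measurable
  finally show "{x \<in> space borel. y < rearr M f x} \<in> sets borel" .
qed

lemma borel_to_lebesgue_on: "g \<in> borel_measurable borel \<Longrightarrow> g \<in> borel_measurable (lebesgue_on S)"
  by (rule measurable_restrict_space1) (rule measurable_completion, simp)

lemma emeasure_lebesgue_on_borel:
  assumes "S \<in> sets borel" "A \<in> sets borel" "A \<subseteq> S"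
  shows "emeasure (lebesgue_on S) A = emeasure lborel A"
  using assms by (subst emeasure_restrict_space) auto

lemma emeasure_rs_lborel:
  assumes "S \<in> sets borel" "A \<subseteq> S"
  shows "emeasure (restrict_space lborel S) A = emeasure lborel A"
  using assms by (subst emeasure_restrict_space) auto

lemma less_mult_indicator: "(s::ennreal) < x * indicator J t \<longleftrightarrow> s < x \<and> t \<in> J"
  by (auto simp: indicator_def)

lemma cut_set:
  fixes F :: "real \<Rightarrow> ennreal"
  assumes "\<And>t. s < F t \<longleftrightarrow> ennreal t < c"
  shows "{t \<in> {t. 0\<le>t \<and> ennreal t< m}. s < F t * indicator {t. 0\<le>t \<and> ennreal t< m} t}
     = {t. 0 \<le> t \<and> ennreal t < min c m}"
proof -
  have "s < F t * indicator {t. 0\<le>t \<and> ennreal t< m} t \<longleftrightarrow> s < F t \<and> 0\<le>t \<and> ennreal t< m" for t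
    using less_mult_indicator[of s "F t" "{t. 0\<le>t \<and> ennreal t< m}" t] by simp
  then show ?thesis using assms by auto
qed

lemma rearr_of_min:
  assumes F: "F \<in> borel_measurable N" and h: "h \<in> borel_measurable L"
    and d: "\<And>s. dst N F s = min (dst L h s) m"
  shows "rearr N F t = rearr L h t * indicator {t. ennreal t < m} t"
proof (rule ennreal_eq_by_gt)
  fix s
  show "s < rearr N F t \<longleftrightarrow> s < rearr L h t * indicator {t. ennreal t < m} t"
    unfolding rearr_gt[OF F] rearr_gt[OF h] less_mult_indicator d by auto
qed




lemma Ival_borel[measurable]: "Ival M \<in> sets borel"
  unfolding Ival_def by (rule ennreal_less_set_borel)

lemma NA_meas:
  assumes \<sigma>: "\<sigma> \<in> measurable M (restrict_space lborel (Ival M))"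
    and h: "h \<in> borel_measurable N"
  shows "(\<lambda>t. rearr N h t * indicator (Ival M) t) \<circ> \<sigma> \<in> borel_measurable M"
proof -
  have "(\<lambda>t. rearr N h t * indicator (Ival M) t) \<in> borel_measurable borel"
    using rearr_borel[OF h] by measurable
  then have "(\<lambda>t. rearr N h t * indicator (Ival M) t) \<in> borel_measurable (restrict_space lborel (Ival M))"
    by (intro measurable_restrict_space1) simp
  then show ?thesis by (rule measurable_comp[OF \<sigma>])
qed

lemma NA_dst:
  assumes \<sigma>: "\<sigma> \<in> measurable M (restrict_space lborel (Ival M))"
    and d: "distr M (restrict_space lborel (Ival M)) \<sigma> = restrict_space lborel (Ival M)"
    and h: "h \<in> borel_measurable N"
  shows "dst M ((\<lambda>t. rearr N h t * indicator (Ival M) t) \<circ> \<sigma>) s = min (dst N h s) (emeasure M (space M))"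
proof -
  let ?\<nu> = "restrict_space lborel (Ival M)"
  let ?F = "\<lambda>t. rearr N h t * indicator (Ival M) t"
  let ?A = "{t \<in> Ival M. s < ?F t}"
  have A: "?A = {t. 0 \<le> t \<and> ennreal t < min (dst N h s) (emeasure M (space M))}"
    unfolding Ival_def by (rule cut_set) (rule rearr_gt[OF h])
  have sp: "space ?\<nu> = Ival M" by (simp add: space_restrict_space)
  have \<sigma>sp: "\<sigma> x \<in> Ival M" if "x \<in> space M" for x
    using measurable_space[OF \<sigma> that] sp by simp
  have Ab: "?A \<in> sets borel" unfolding A by (rule ennreal_less_set_borel)
  have Asub: "?A \<subseteq> Ival M" by blast
  have Ib: "Ival M \<inter> space lborel \<in> sets lborel" using Ival_borel by simp
  have Asets: "?A \<in> sets ?\<nu>"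
    using Ab Asub by (subst sets_restrict_space_iff[OF Ib]) simp
  have "{x\<in>space M. s < (?F \<circ> \<sigma>) x} = \<sigma> -` ?A \<inter> space M"
    using \<sigma>sp by auto
  then have "dst M (?F \<circ> \<sigma>) s = emeasure M (\<sigma> -` ?A \<inter> space M)"
    by (simp add: dst_def)
  also have "\<dots> = emeasure (distr M ?\<nu> \<sigma>) ?A"
    by (rule emeasure_distr[OF \<sigma> Asets, symmetric])
  also have "\<dots> = emeasure ?\<nu> ?A" by (simp add: d)
  also have "\<dots> = emeasure lborel ?A"
    by (rule emeasure_rs_lborel[OF Ival_borel Asub])
  also have "\<dots> = min (dst N h s) (emeasure M (space M))"
    unfolding A by (rule emeasure_lborel_ennreal_less)
  finally show ?thesis .
qed

lemma dst_rearr: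
  assumes f: "f \<in> borel_measurable M"
  shows "dst (lebesgue_on {0..}) (rearr M f) s = dst M f s"
proof -
  have "{t \<in> space (lebesgue_on {0..}). s < rearr M f t} = {t. 0 \<le> t \<and> ennreal t < dst M f s}"
    using rearr_gt[OF f] by auto
  then have "dst (lebesgue_on {0..}) (rearr M f) s = emeasure (lebesgue_on {0..}) {t. 0 \<le> t \<and> ennreal t < dst M f s}"
    unfolding dst_def by simp
  also have "\<dots> = emeasure lborel {t. 0 \<le> t \<and> ennreal t < dst M f s}"
    by (rule emeasure_lebesgue_on_borel) auto
  finally show ?thesis by (simp add: emeasure_lborel_ennreal_less)
qed

lemma dst_le_space: "f \<in> borel_measurable M \<Longrightarrow> dst M f s \<le> emeasure M (space M)"
  unfolding dst_def by (intro emeasure_mono) auto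



lemma HB:
  assumes hk: "hlp_rel L h k" and t: "0 < t"
  shows "(\<integral>\<^sup>+ s\<in>{0..t}. rearr L h s * indicator {t. ennreal t < m} s \<partial>lborel)
       \<le> (\<integral>\<^sup>+ s\<in>{0..t}. rearr L k s * indicator {t. ennreal t < m} s \<partial>lborel)"
proof (cases "ennreal t < m")
  case True
  have eq: "(\<integral>\<^sup>+ s\<in>{0..t}. rearr L g s * indicator {t. ennreal t < m} s \<partial>lborel)
      = (\<integral>\<^sup>+ s\<in>{0..t}. rearr L g s \<partial>lborel)" for g
  proof (rule nn_integral_cong)
    fix s
    show "rearr L g s * indicator {t. ennreal t < m} s * indicator {0..t} s = rearr L g s * indicator {0..t} s"
    proof (cases "s \<in> {0..t}")
      case True
      then have "ennreal s < m" using \<open>ennreal t < m\<close> by (meson atLeastAtMost_iff ennreal_leI le_less_trans)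
      then show ?thesis by (simp add: indicator_def)
    qed (auto simp: indicator_def)
  qed
  show ?thesis unfolding eq using hk t by (simp add: hlp_rel_def)
next
  case False
  then have "m \<noteq> \<infinity>" by auto
  then obtain m0 where m0: "m = ennreal m0" "0 \<le> m0" by (cases m) auto
  have "m0 \<le> t" using False m0 t ennreal_less_iff[of t m0] by auto
  have eq: "(\<integral>\<^sup>+ s\<in>{0..t}. rearr L g s * indicator {t. ennreal t < m} s \<partial>lborel)
      = (\<integral>\<^sup>+ s\<in>{0..m0}. rearr L g s \<partial>lborel)" for g
  proof -
    have "(\<integral>\<^sup>+ s\<in>{0..t}. rearr L g s * indicator {t. ennreal t < m} s \<partial>lborel)
       = (\<integral>\<^sup>+ s\<in>{0..<m0}. rearr L g s \<partial>lborel)"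
    proof (rule nn_integral_cong)
      fix s
      show "rearr L g s * indicator {t. ennreal t < m} s * indicator {0..t} s = rearr L g s * indicator {0..<m0} s"
        using \<open>m0 \<le> t\<close> m0 by (auto simp: indicator_def ennreal_less_iff)
    qed
    also have "\<dots> = (\<integral>\<^sup>+ s\<in>{0..m0}. rearr L g s \<partial>lborel)"
      by (rule nn_integral_cong_AE) (use AE_lborel_singleton[of m0] in \<open>auto simp: indicator_def\<close>)
    finally show ?thesis .
  qed
  show ?thesis
  proof (cases "m0 = 0")
    case True
    have "(\<integral>\<^sup>+ s\<in>{0..m0}. rearr L h s \<partial>lborel) = (\<integral>\<^sup>+ s. (0::ennreal) \<partial>(lborel::real measure))"
      unfolding True by (rule nn_integral_cong_AE) (use AE_lborel_singleton[of 0] in \<open>eventually_elim, auto simp: indicator_def\<close>)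
    then have "(\<integral>\<^sup>+ s\<in>{0..m0}. rearr L h s \<partial>lborel) = 0" by simp
    then show ?thesis unfolding eq by simp
  next
    case False
    then show ?thesis unfolding eq using hk m0 by (simp add: hlp_rel_def)
  qed
qed



lemma ri_eq:
  assumes "ri_qbfn M X" "F \<in> borel_measurable M" "f \<in> borel_measurable M" "dst M F = dst M f"
  shows "X F = X f"
proof -
  have "\<forall>t\<ge>0. rearr M F t = rearr M f t" using rearr_cong_dst[OF assms(4)] by simp
  then show ?thesis using assms(1-3) unfolding ri_qbfn_def rearrangement_invariant_def by blast
qed

lemma rearr_rearr:
  assumes f: "f \<in> borel_measurable M"
  shows "rearr (lebesgue_on {0..}) (rearr M f) = rearr M f"
  by (rule rearr_cong_dst) (simp add: fun_eq_iff dst_rearr[OF f])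

lemma hlp_rearr:
  assumes f: "f \<in> borel_measurable M" and g: "g \<in> borel_measurable M" and "hlp_rel M f g"
  shows "hlp_rel (lebesgue_on {0..}) (rearr M f) (rearr M g)"
  using assms(3) unfolding hlp_rel_def rearr_rearr[OF f] rearr_rearr[OF g] .

lemma NA_case:
  fixes M :: "'a measure" and X and Xb :: "(real \<Rightarrow> ennreal) \<Rightarrow> ennreal"
  assumes ri: "ri_qbfn M X"
    and \<sigma>: "\<sigma> \<in> measurable M (restrict_space lborel (Ival M))"
    and d: "distr M (restrict_space lborel (Ival M)) \<sigma> = restrict_space lborel (Ival M)"
    and Xb: "Xb = (\<lambda>f. X ((\<lambda>t. rearr (lebesgue_on {0..}) f t * indicator (Ival M) t) \<circ> \<sigma>))"
  shows "HLP_principle M X \<longleftrightarrow> HLP_principle (lebesgue_on {0..}) Xb"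
proof
  let ?L = "lebesgue_on {0..} :: real measure"
  let ?m = "emeasure M (space M)"
  let ?\<Phi> = "\<lambda>h. (\<lambda>t. rearr ?L h t * indicator (Ival M) t) \<circ> \<sigma>"
  assume H: "HLP_principle M X"
  show "HLP_principle ?L Xb"
    unfolding HLP_principle_def
  proof (intro ballI impI)
    fix h k assume h: "h \<in> borel_measurable ?L" and k: "k \<in> borel_measurable ?L" and hk: "hlp_rel ?L h k"
    have mh: "?\<Phi> h \<in> borel_measurable M" by (rule NA_meas[OF \<sigma> h])
    have mk: "?\<Phi> k \<in> borel_measurable M" by (rule NA_meas[OF \<sigma> k])
    have rh: "rearr M (?\<Phi> h) t = rearr ?L h t * indicator {t. ennreal t < ?m} t" for t
      by (rule rearr_of_min[OF mh h NA_dst[OF \<sigma> d h]])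
    have rk: "rearr M (?\<Phi> k) t = rearr ?L k t * indicator {t. ennreal t < ?m} t" for t
      by (rule rearr_of_min[OF mk k NA_dst[OF \<sigma> d k]])
    have "hlp_rel M (?\<Phi> h) (?\<Phi> k)"
      unfolding hlp_rel_def rh rk by (intro allI impI HB[OF hk])
    then have "X (?\<Phi> h) \<le> X (?\<Phi> k)" using H mh mk unfolding HLP_principle_def by blast
    then show "Xb h \<le> Xb k" unfolding Xb by simp
  qed
next
  let ?L = "lebesgue_on {0..} :: real measure"
  let ?m = "emeasure M (space M)"
  let ?\<Phi> = "\<lambda>h. (\<lambda>t. rearr ?L h t * indicator (Ival M) t) \<circ> \<sigma>"
  assume H: "HLP_principle ?L Xb"
  have key: "Xb (rearr M f) = X f" if f: "f \<in> borel_measurable M" for f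
  proof -
    have \<phi>: "rearr M f \<in> borel_measurable ?L" by (rule borel_to_lebesgue_on[OF rearr_borel[OF f]])
    have m\<phi>: "?\<Phi> (rearr M f) \<in> borel_measurable M" by (rule NA_meas[OF \<sigma> \<phi>])
    have "dst M (?\<Phi> (rearr M f)) s = dst M f s" for s
      unfolding NA_dst[OF \<sigma> d \<phi>] dst_rearr[OF f] using dst_le_space[OF f] by (simp add: min_absorb1)
    then have "X (?\<Phi> (rearr M f)) = X f" by (intro ri_eq[OF ri m\<phi> f]) auto
    then show ?thesis unfolding Xb by simp
  qed
  show "HLP_principle M X"
    unfolding HLP_principle_def
  proof (intro ballI impI)
    fix f g assume f: "f \<in> borel_measurable M" and g: "g \<in> borel_measurable M" and fg: "hlp_rel M f g"
    have "Xb (rearr M f) \<le> Xb (rearr M g)"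
      using H hlp_rearr[OF f g fg] borel_to_lebesgue_on[OF rearr_borel[OF f]] borel_to_lebesgue_on[OF rearr_borel[OF g]]
      unfolding HLP_principle_def by blast
    then show "X f \<le> X g" using key[OF f] key[OF g] by simp
  qed
qed



lemma atom_dich:
  assumes A: "atom M A" and S: "S \<in> sets M"
  shows "emeasure M (A \<inter> S) = 0 \<or> emeasure M (A \<inter> S) = emeasure M A"
proof -
  have As: "A \<in> sets M" using A by (simp add: atom_def)
  have "emeasure M (A \<inter> S) = 0 \<or> emeasure M (A - A \<inter> S) = 0"
    using A S As unfolding atom_def by (meson Int_lower1 sets.Int)
  moreover have "emeasure M (A \<inter> S) + emeasure M (A - A \<inter> S) = emeasure M A"
  proof -
    have "emeasure M (A \<inter> S) + emeasure M (A - A \<inter> S) = emeasure M ((A \<inter> S) \<union> (A - A \<inter> S))"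
      by (rule plus_emeasure) (use As S in auto)
    also have "(A \<inter> S) \<union> (A - A \<inter> S) = A" by blast
    finally show ?thesis .
  qed
  ultimately show ?thesis by auto
qed

lemma suminf_if_single:
  fixes c :: "nat \<Rightarrow> ennreal"
  assumes "\<And>m. m \<noteq> n \<Longrightarrow> c m = 0"
  shows "(\<Sum>m. c m) = c n"
proof -
  have "(\<Sum>m. c m) = sum c {n}" by (rule suminf_finite) (use assms in auto)
  then show ?thesis by simp
qed

lemma quant_sum:
  fixes \<beta> :: real
  assumes b: "0 < \<beta>"
  shows "(\<Sum>n. if P n then ennreal \<beta> else 0) = \<infinity> \<or> (\<exists>j::nat. (\<Sum>n. if P n then ennreal \<beta> else 0) = ennreal (\<beta> * real j))"
proof (cases "finite {n. P n}")
  case True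
  have "(\<Sum>n. if P n then ennreal \<beta> else 0) = (\<Sum>n\<in>{n. P n}. if P n then ennreal \<beta> else 0)"
    by (rule suminf_finite) (use True in auto)
  also have "\<dots> = (\<Sum>n\<in>{n. P n}. ennreal \<beta>)" by (rule sum.cong) auto
  also have "\<dots> = ennreal (\<beta> * real (card {n. P n}))"
    using b by (simp add: ennreal_mult' mult.commute ennreal_of_nat_eq_real_of_nat)
  finally show ?thesis by blast
next
  case False
  have ge: "ennreal (\<beta> * real j) \<le> (\<Sum>n. if P n then ennreal \<beta> else 0)" for j
  proof -
    obtain F where F: "F \<subseteq> {n. P n}" "finite F" "card F = j"
      using infinite_arbitrarily_large[OF False] by blast
    have "ennreal (\<beta> * real j) = (\<Sum>n\<in>F. ennreal \<beta>)"
      using b F by (simp add: ennreal_mult' mult.commute ennreal_of_nat_eq_real_of_nat)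
    also have "\<dots> = (\<Sum>n\<in>F. if P n then ennreal \<beta> else 0)" by (rule sum.cong) (use F in auto)
    also have "\<dots> \<le> (\<Sum>n. if P n then ennreal \<beta> else 0)" using F(2) by (intro sum_le_suminf) auto
    finally show ?thesis .
  qed
  have "(\<Sum>n. if P n then ennreal \<beta> else 0) = \<infinity>"
  proof (rule ccontr)
    assume "(\<Sum>n. if P n then ennreal \<beta> else 0) \<noteq> \<infinity>"
    then obtain r where r: "(\<Sum>n. if P n then ennreal \<beta> else 0) = ennreal r" "0 \<le> r"
      by (cases "(\<Sum>n. if P n then ennreal \<beta> else 0)") auto
    obtain j :: nat where j: "r / \<beta> < real j" using reals_Archimedean2 by blast
    have "\<beta> * real j \<le> r" using ge[of j] r b by (simp add: ennreal_le_iff)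
    moreover have "r < \<beta> * real j" using j b by (simp add: divide_less_eq mult.commute)
    ultimately show False by simp
  qed
  then show ?thesis by blast
qed

definition quant :: "real \<Rightarrow> ennreal \<Rightarrow> bool" where
  "quant \<beta> D \<longleftrightarrow> D = \<infinity> \<or> (\<exists>j::nat. D = ennreal (\<beta> * real j))"

lemma quant_step:
  assumes b: "0 < \<beta>" and q: "quant \<beta> D" and t1: "\<beta> * real n \<le> t" and t2: "t < \<beta> * real (Suc n)"
  shows "ennreal t < D \<longleftrightarrow> ennreal (\<beta> * real n) < D"
  using q unfolding quant_def
proof
  assume "D = \<infinity>" then show ?thesis by simp
next
  assume "\<exists>j::nat. D = ennreal (\<beta> * real j)"
  then obtain j :: nat where D: "D = ennreal (\<beta> * real j)" by blast
  have t0: "0 \<le> t" using t1 b by (meson mult_nonneg_nonneg of_nat_0_le_iff order.trans less_imp_le)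
  have "t < \<beta> * real j \<longleftrightarrow> n < j"
  proof
    assume "t < \<beta> * real j"
    then have "\<beta> * real n < \<beta> * real j" using t1 by linarith
    then show "n < j" using b by simp
  next
    assume "n < j"
    then have "real (Suc n) \<le> real j" by simp
    then have "\<beta> * real (Suc n) \<le> \<beta> * real j" using b by (intro mult_left_mono) auto
    then show "t < \<beta> * real j" using t2 by linarith
  qed
  moreover have "\<beta> * real n < \<beta> * real j \<longleftrightarrow> n < j" using b by simp
  ultimately show ?thesis unfolding D using t0 b by (simp add: ennreal_less_iff)
qed

lemma quant_sum_ge:
  assumes b: "0 < \<beta>" and q: "quant \<beta> D"
  shows "(\<Sum>n. if ennreal (\<beta> * real n) < D then ennreal \<beta> else 0) = D"
  using q unfolding quant_def
proof
  assume D: "D = \<infinity>"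
  have "(\<Sum>n. if ennreal (\<beta> * real n) < D then ennreal \<beta> else 0) = (\<Sum>n. if True then ennreal \<beta> else 0)"
    unfolding D by simp
  moreover have "(\<Sum>n::nat. if True then ennreal \<beta> else 0) = \<infinity>"
  proof -
    have "\<not> finite {n::nat. True}" by simp
    then have "(\<Sum>n::nat. if True then ennreal \<beta> else 0) \<noteq> ennreal (\<beta> * real j)" for j
    proof -
      have "ennreal (\<beta> * real (Suc j)) = (\<Sum>n<Suc j. ennreal \<beta>)"
        using b by (simp add: ennreal_mult' mult.commute ennreal_of_nat_eq_real_of_nat)
      also have "\<dots> \<le> (\<Sum>n::nat. if True then ennreal \<beta> else 0)" using sum_le_suminf[of "\<lambda>n. ennreal \<beta>" "{..<Suc j}"] by simp
      finally have "ennreal (\<beta> * real (Suc j)) \<le> (\<Sum>n::nat. if True then ennreal \<beta> else 0)" .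
      moreover have "\<beta> * real j < \<beta> * real (Suc j)" using b by simp
      ultimately show ?thesis using b
        by (metis ennreal_le_iff le_less_trans less_le_not_le mult_nonneg_nonneg of_nat_0_le_iff order_less_imp_le)
    qed
    then show ?thesis using quant_sum[OF b, of "\<lambda>n. True"] by blast
  qed
  ultimately show ?thesis using D by simp
next
  assume "\<exists>j::nat. D = ennreal (\<beta> * real j)"
  then obtain j :: nat where D: "D = ennreal (\<beta> * real j)" by blast
  have iff: "ennreal (\<beta> * real n) < D \<longleftrightarrow> n < j" for n
    unfolding D using b by (simp add: ennreal_less_iff)
  have "(\<Sum>n. if ennreal (\<beta> * real n) < D then ennreal \<beta> else 0) = (\<Sum>n\<in>{..<j}. if ennreal (\<beta> * real n) < D then ennreal \<beta> else 0)"
    by (rule suminf_finite) (auto simp: iff)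
  also have "\<dots> = (\<Sum>n\<in>{..<j}. ennreal \<beta>)" by (rule sum.cong) (auto simp: iff)
  also have "\<dots> = D" unfolding D using b by (simp add: ennreal_mult' mult.commute ennreal_of_nat_eq_real_of_nat)
  finally show ?thesis .
qed

lemma floor_bounds:
  assumes b: "0 < \<beta>" and t: "0 \<le> (t::real)"
  shows "\<beta> * real (nat \<lfloor>t / \<beta>\<rfloor>) \<le> t" "t < \<beta> * real (Suc (nat \<lfloor>t / \<beta>\<rfloor>))"
proof -
  have tb: "0 \<le> t / \<beta>" using b t by simp
  have r: "real (nat \<lfloor>t / \<beta>\<rfloor>) = of_int \<lfloor>t / \<beta>\<rfloor>" using tb by simp
  have "of_int \<lfloor>t / \<beta>\<rfloor> \<le> t / \<beta>" by (rule of_int_floor_le)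
  then show "\<beta> * real (nat \<lfloor>t / \<beta>\<rfloor>) \<le> t" using b unfolding r by (simp add: le_divide_eq mult.commute)
  have "t / \<beta> < of_int \<lfloor>t / \<beta>\<rfloor> + 1" by (rule real_of_int_floor_add_one_gt)
  then have h1: "t < (of_int \<lfloor>t / \<beta>\<rfloor> + 1) * \<beta>" using b pos_divide_less_eq by blast
  then show "t < \<beta> * real (Suc (nat \<lfloor>t / \<beta>\<rfloor>))" unfolding of_nat_Suc r
    by (simp add: algebra_simps)
qed

lemma down_closed:
  assumes P: "\<And>n. P (Suc n) \<Longrightarrow> P n" and "P j" "n \<le> j"
  shows "P n"
  using assms(3,2)
proof (induction rule: inc_induct)
  case base then show ?case .
next
  case (step m) then show ?case using P by blast
qed

lemma sum_down_closed:
  assumes b: "0 < \<beta>" and P: "\<And>n. P (Suc n) \<Longrightarrow> P n" and t: "0 \<le> t"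
  shows "ennreal t < (\<Sum>n. if P n then ennreal \<beta> else 0) \<longleftrightarrow> P (nat \<lfloor>t / \<beta>\<rfloor>)"
proof -
  let ?j = "nat \<lfloor>t / \<beta>\<rfloor>"
  note fb = floor_bounds[OF b t]
  show ?thesis
  proof
    assume Pj: "P ?j"
    have "ennreal t < ennreal (\<beta> * real (Suc ?j))" using fb t by (simp add: ennreal_less_iff)
    also have "\<dots> = (\<Sum>n<Suc ?j. if P n then ennreal \<beta> else 0)"
    proof -
      have "(\<Sum>n<Suc ?j. if P n then ennreal \<beta> else 0) = (\<Sum>n<Suc ?j. ennreal \<beta>)"
        by (rule sum.cong) (use down_closed[where P=P, OF P Pj] in auto)
      then show ?thesis using b by (simp add: ennreal_mult' mult.commute ennreal_of_nat_eq_real_of_nat)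
    qed
    also have "\<dots> \<le> (\<Sum>n. if P n then ennreal \<beta> else 0)" by (rule sum_le_suminf) auto
    finally show "ennreal t < (\<Sum>n. if P n then ennreal \<beta> else 0)" .
  next
    assume a: "ennreal t < (\<Sum>n. if P n then ennreal \<beta> else 0)"
    show "P ?j"
    proof (rule ccontr)
      assume nP: "\<not> P ?j"
      have lt: "n < ?j" if Pn: "P n" for n
      proof (rule ccontr)
        assume "\<not> n < ?j"
        then have "?j \<le> n" by simp
        then show False using down_closed[where P=P, OF P Pn] nP by blast
      qed
      have "(\<Sum>n. if P n then ennreal \<beta> else 0) = (\<Sum>n<?j. if P n then ennreal \<beta> else 0)"
        by (rule suminf_finite) (use lt in auto)
      also have "\<dots> \<le> (\<Sum>n<?j. ennreal \<beta>)" by (rule sum_mono) auto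
      also have "\<dots> = ennreal (\<beta> * real ?j)" using b by (simp add: ennreal_mult' mult.commute ennreal_of_nat_eq_real_of_nat)
      also have "\<dots> \<le> ennreal t" using fb by (simp add: ennreal_leI)
      finally show False using a by simp
    qed
  qed
qed




lemma rearr_anti: "t \<le> t' \<Longrightarrow> rearr N f t' \<le> rearr N f t"
  unfolding rearr_def
proof (rule Inf_superset_mono, rule subsetI)
  fix s assume a: "t \<le> t'" "s \<in> {s. emeasure N {x \<in> space N. s < f x} \<le> ennreal t}"
  have "ennreal t \<le> ennreal t'" using a(1) by (rule ennreal_leI)
  then show "s \<in> {s. emeasure N {x \<in> space N. s < f x} \<le> ennreal t'}" using a(2) by simp
qed

lemma closed_open:
  fixes F :: "real \<Rightarrow> ennreal"
  shows "(\<integral>\<^sup>+ s\<in>{a..b}. F s \<partial>lborel) = (\<integral>\<^sup>+ s\<in>{a..<b}. F s \<partial>lborel)"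
  by (rule nn_integral_cong_AE) (use AE_lborel_singleton[of b] in \<open>eventually_elim, auto simp: indicator_def\<close>)




lemma convex_ennreal:
  fixes x1 x2 p1 p2 :: ennreal and l :: real
  assumes l: "0 \<le> l" "l \<le> 1" and x: "x1 \<le> x2" and xp: "x1 + p1 \<le> x2 + p2"
  shows "x1 + ennreal l * p1 \<le> x2 + ennreal l * p2"
proof -
  have s1: "ennreal (1 - l) + ennreal l = 1"
  proof -
    have "ennreal (1 - l) + ennreal l = ennreal ((1 - l) + l)" using l by (intro ennreal_plus[symmetric]) auto
    also have "(1 - l) + l = 1" by simp
    finally show ?thesis by (simp only: ennreal_1)
  qed
  have eq: "x + ennreal l * p = ennreal (1 - l) * x + ennreal l * (x + p)" for x p :: ennreal
  proof -
    have "ennreal (1 - l) * x + ennreal l * (x + p) = (ennreal (1 - l) * x + ennreal l * x) + ennreal l * p"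
      by (simp only: distrib_left add.assoc)
    also have "ennreal (1 - l) * x + ennreal l * x = (ennreal (1 - l) + ennreal l) * x"
      by (simp only: distrib_right)
    also have "\<dots> = x" by (simp only: s1 mult_1)
    finally show ?thesis by (rule sym)
  qed
  have a1: "ennreal (1 - l) * x1 \<le> ennreal (1 - l) * x2" by (rule mult_left_mono[OF x]) simp
  have a2: "ennreal l * (x1 + p1) \<le> ennreal l * (x2 + p2)" by (rule mult_left_mono[OF xp]) simp
  have "ennreal (1 - l) * x1 + ennreal l * (x1 + p1) \<le> ennreal (1 - l) * x2 + ennreal l * (x2 + p2)"
    by (rule add_mono[OF a1 a2])
  then show ?thesis unfolding eq[of x1 p1] eq[of x2 p2] .
qed



lemma split_sum:
  fixes F :: "real \<Rightarrow> ennreal" and \<beta> :: real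
  assumes b: "0 < \<beta>" and F: "F \<in> borel_measurable borel"
  shows "(\<integral>\<^sup>+ s\<in>{0..<\<beta> * real j}. F s \<partial>lborel) = (\<Sum>n<j. \<integral>\<^sup>+ s\<in>{\<beta> * real n..<\<beta> * real (Suc n)}. F s \<partial>lborel)"
proof (induction j)
  case 0
  then show ?case by simp
next
  case (Suc j)
  have ind: "indicator {0..<\<beta> * real (Suc j)} s = (indicator {0..<\<beta> * real j} s + indicator {\<beta> * real j..<\<beta> * real (Suc j)} s :: ennreal)" for s
  proof -
    have "0 \<le> \<beta> * real j" using b by simp
    moreover have "\<beta> * real j \<le> \<beta> * real (Suc j)" using b by simp
    ultimately show ?thesis by (auto simp: indicator_def)
  qed
  have "(\<integral>\<^sup>+ s\<in>{0..<\<beta> * real (Suc j)}. F s \<partial>lborel)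
      = (\<integral>\<^sup>+ s. F s * indicator {0..<\<beta> * real j} s + F s * indicator {\<beta> * real j..<\<beta> * real (Suc j)} s \<partial>lborel)"
    unfolding ind by (simp add: distrib_left)
  also have "\<dots> = (\<integral>\<^sup>+ s\<in>{0..<\<beta> * real j}. F s \<partial>lborel) + (\<integral>\<^sup>+ s\<in>{\<beta> * real j..<\<beta> * real (Suc j)}. F s \<partial>lborel)"
    by (rule nn_integral_add) (use F in auto)
  finally show ?case using Suc by simp
qed

lemma floor_piece:
  fixes \<beta> s :: real
  assumes b: "0 < \<beta>" and s: "\<beta> * real n \<le> s" "s < \<beta> * real (Suc n)"
  shows "nat \<lfloor>s / \<beta>\<rfloor> = n"
proof -
  have "real n \<le> s / \<beta>" using b s(1) by (simp add: le_divide_eq mult.commute)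
  moreover have "s / \<beta> < real n + 1"
  proof -
    have "s < (real n + 1) * \<beta>" using s(2) by (simp add: algebra_simps)
    then show ?thesis using b pos_divide_less_eq by blast
  qed
  ultimately have "\<lfloor>s / \<beta>\<rfloor> = int n" by (simp add: floor_eq_iff)
  then show ?thesis by simp
qed


lemma int_formula:
  fixes \<beta> t :: real and Rf G :: "real \<Rightarrow> ennreal" and a :: "nat \<Rightarrow> ennreal"
  assumes b: "0 < \<beta>" and Rm: "Rf \<in> borel_measurable borel" and Gm: "G \<in> borel_measurable borel"
    and R: "\<And>s. 0 \<le> s \<Longrightarrow> Rf s = a (nat \<lfloor>s / \<beta>\<rfloor>)"
    and a: "\<And>n. a n = ennreal (1 / \<beta>) * (\<integral>\<^sup>+ s\<in>{\<beta> * real n..\<beta> * real (n + 1)}. G s \<partial>lborel)"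
    and t: "0 \<le> t"
  shows "(\<integral>\<^sup>+ s\<in>{0..t}. Rf s \<partial>lborel) = (\<integral>\<^sup>+ s\<in>{0..<\<beta> * real (nat \<lfloor>t / \<beta>\<rfloor>)}. G s \<partial>lborel)
     + ennreal ((t - \<beta> * real (nat \<lfloor>t / \<beta>\<rfloor>)) / \<beta>) * (\<integral>\<^sup>+ s\<in>{\<beta> * real (nat \<lfloor>t / \<beta>\<rfloor>)..<\<beta> * real (Suc (nat \<lfloor>t / \<beta>\<rfloor>))}. G s \<partial>lborel)"
proof -
  define j where "j = nat \<lfloor>t / \<beta>\<rfloor>"
  have fb: "\<beta> * real j \<le> t" "t < \<beta> * real (Suc j)" using floor_bounds[OF b t] unfolding j_def by auto
  have bj0: "0 \<le> \<beta> * real j" using b by simp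
  define P where "P n = (\<integral>\<^sup>+ s\<in>{\<beta> * real n..<\<beta> * real (Suc n)}. G s \<partial>lborel)" for n
  have aP: "a n = ennreal (1 / \<beta>) * P n" for n
    unfolding a P_def using closed_open by simp
  have piece: "(\<integral>\<^sup>+ s\<in>{\<beta> * real n..<\<beta> * real (Suc n)}. Rf s \<partial>lborel) = P n" for n
  proof -
    have "(\<integral>\<^sup>+ s\<in>{\<beta> * real n..<\<beta> * real (Suc n)}. Rf s \<partial>lborel) = (\<integral>\<^sup>+ s. a n * indicator {\<beta> * real n..<\<beta> * real (Suc n)} s \<partial>lborel)"
    proof (rule nn_integral_cong)
      fix s
      show "Rf s * indicator {\<beta> * real n..<\<beta> * real (Suc n)} s = a n * indicator {\<beta> * real n..<\<beta> * real (Suc n)} s"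
      proof (cases "s \<in> {\<beta> * real n..<\<beta> * real (Suc n)}")
        case True
        have h0: "0 \<le> \<beta> * real n" using b by simp
        then have "0 \<le> s" using True by simp
        then show ?thesis using True R floor_piece[OF b, of n s] by simp
      qed simp
    qed
    also have "\<dots> = a n * emeasure lborel {\<beta> * real n..<\<beta> * real (Suc n)}"
      by (rule nn_integral_cmult_indicator) simp
    also have "emeasure lborel {\<beta> * real n..<\<beta> * real (Suc n)} = ennreal \<beta>"
      using b by (simp add: algebra_simps)
    also have "a n * ennreal \<beta> = P n"
    proof -
      have inv: "ennreal (1/\<beta>) * ennreal \<beta> = 1" using b by (simp add: ennreal_mult''[symmetric])
      have "a n * ennreal \<beta> = (ennreal (1/\<beta>) * ennreal \<beta>) * P n"
        unfolding aP by (simp only: mult_ac)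
      then show ?thesis unfolding inv by simp
    qed
    finally show ?thesis .
  qed
  have last: "(\<integral>\<^sup>+ s\<in>{\<beta> * real j..t}. Rf s \<partial>lborel) = a j * ennreal (t - \<beta> * real j)"
  proof -
    have "(\<integral>\<^sup>+ s\<in>{\<beta> * real j..t}. Rf s \<partial>lborel) = (\<integral>\<^sup>+ s. a j * indicator {\<beta> * real j..t} s \<partial>lborel)"
    proof (rule nn_integral_cong)
      fix s
      show "Rf s * indicator {\<beta> * real j..t} s = a j * indicator {\<beta> * real j..t} s"
      proof (cases "s \<in> {\<beta> * real j..t}")
        case True
        then have "0 \<le> s" using bj0 by auto
        moreover have "nat \<lfloor>s / \<beta>\<rfloor> = j" using True fb by (intro floor_piece[OF b]) auto
        ultimately show ?thesis using True R by simp
      qed simp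
    qed
    also have "\<dots> = a j * emeasure lborel {\<beta> * real j..t}"
      by (rule nn_integral_cmult_indicator) simp
    finally show ?thesis using fb by simp
  qed
  have ind: "indicator {0..t} s = (indicator {0..<\<beta> * real j} s + indicator {\<beta> * real j..t} s :: ennreal)" for s
    using bj0 fb by (auto simp: indicator_def)
  have "(\<integral>\<^sup>+ s\<in>{0..t}. Rf s \<partial>lborel)
      = (\<integral>\<^sup>+ s. Rf s * indicator {0..<\<beta> * real j} s + Rf s * indicator {\<beta> * real j..t} s \<partial>lborel)"
    unfolding ind by (simp add: distrib_left)
  also have "\<dots> = (\<integral>\<^sup>+ s\<in>{0..<\<beta> * real j}. Rf s \<partial>lborel) + (\<integral>\<^sup>+ s\<in>{\<beta> * real j..t}. Rf s \<partial>lborel)"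
    by (rule nn_integral_add) (use Rm in auto)
  also have "(\<integral>\<^sup>+ s\<in>{0..<\<beta> * real j}. Rf s \<partial>lborel) = (\<Sum>n<j. P n)"
    unfolding split_sum[OF b Rm] piece ..
  also have "(\<Sum>n<j. P n) = (\<integral>\<^sup>+ s\<in>{0..<\<beta> * real j}. G s \<partial>lborel)"
    unfolding split_sum[OF b Gm] P_def ..
  finally have main: "(\<integral>\<^sup>+ s\<in>{0..t}. Rf s \<partial>lborel) = (\<integral>\<^sup>+ s\<in>{0..<\<beta> * real j}. G s \<partial>lborel) + (\<integral>\<^sup>+ s\<in>{\<beta> * real j..t}. Rf s \<partial>lborel)" .
  have aj: "a j * ennreal (t - \<beta> * real j) = ennreal ((t - \<beta> * real j) / \<beta>) * P j"
  proof -
    have "a j * ennreal (t - \<beta> * real j) = (ennreal (1 / \<beta>) * ennreal (t - \<beta> * real j)) * P j"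
      unfolding aP by (simp add: mult_ac)
    also have "ennreal (1 / \<beta>) * ennreal (t - \<beta> * real j) = ennreal ((t - \<beta> * real j) / \<beta>)"
      using b fb by (simp add: ennreal_mult''[symmetric] del: ennreal_mult'')
    finally show ?thesis .
  qed
  show ?thesis unfolding j_def[symmetric] main last aj P_def ..
qed



context
  fixes M :: "'a measure" and \<beta> :: real and e :: "nat \<Rightarrow> 'a set"
  assumes b: "0 < \<beta>" and at: "\<forall>A. atom M A \<longrightarrow> emeasure M A = ennreal \<beta>"
    and en: "atom_enum M \<beta> e"
begin

definition TS :: "(nat \<Rightarrow> ennreal) \<Rightarrow> 'a \<Rightarrow> ennreal" where
  "TS c x = (\<Sum>n. if n \<in> Nset M \<beta> then indicator (e n) x * c n else 0)"

lemma e_atom: "n \<in> Nset M \<beta> \<Longrightarrow> atom M (e n)"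
  using en by (simp add: atom_enum_def)

lemma e_sets: "n \<in> Nset M \<beta> \<Longrightarrow> e n \<in> sets M"
  using e_atom by (simp add: atom_def)

lemma e_meas: "n \<in> Nset M \<beta> \<Longrightarrow> emeasure M (e n) = ennreal \<beta>"
  using e_atom at by blast

lemma e_disj: "n \<in> Nset M \<beta> \<Longrightarrow> m \<in> Nset M \<beta> \<Longrightarrow> m \<noteq> n \<Longrightarrow> e m \<inter> e n = {}"
  using en unfolding atom_enum_def disjoint_family_on_def by blast

lemma decomp:
  assumes S: "S \<in> sets M"
  shows "emeasure M S = (\<Sum>n. if n \<in> Nset M \<beta> then emeasure M (e n \<inter> S) else 0)"
proof -
  define E where "E n = (if n \<in> Nset M \<beta> then e n \<inter> S else {})" for n
  have Es: "E n \<in> sets M" for n unfolding E_def using e_sets S by auto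
  have Ed: "disjoint_family E"
    unfolding disjoint_family_on_def
  proof (intro ballI impI)
    fix m n :: nat assume "m \<noteq> n"
    then show "E m \<inter> E n = {}"
      unfolding E_def using e_disj[of n m] by (cases "m \<in> Nset M \<beta>"; cases "n \<in> Nset M \<beta>") auto
  qed
  define U where "U = (\<Union>n. E n)"
  have Us: "U \<in> sets M" unfolding U_def using Es by auto
  have null: "emeasure M (space M - (\<Union>n\<in>Nset M \<beta>. e n)) = 0" using en by (simp add: atom_enum_def)
  have Vs: "(\<Union>n\<in>Nset M \<beta>. e n) \<in> sets M" using e_sets by (intro sets.countable_UN'') auto
  have "emeasure M (S - U) = 0"
  proof (rule emeasure_eq_0[OF _ null])
    show "space M - (\<Union>n\<in>Nset M \<beta>. e n) \<in> sets M" using Vs by auto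
    show "S - U \<subseteq> space M - (\<Union>n\<in>Nset M \<beta>. e n)"
    proof
      fix x assume x: "x \<in> S - U"
      have "x \<in> space M" using sets.sets_into_space[OF S] x by blast
      moreover have "x \<notin> e n" if "n \<in> Nset M \<beta>" for n
        using x that unfolding U_def E_def by auto
      ultimately show "x \<in> space M - (\<Union>n\<in>Nset M \<beta>. e n)" by blast
    qed
  qed
  moreover have "emeasure M S = emeasure M U + emeasure M (S - U)"
  proof -
    have "U \<subseteq> S" unfolding U_def E_def by auto
    then have "S = U \<union> (S - U)" by auto
    moreover have "emeasure M (U \<union> (S - U)) = emeasure M U + emeasure M (S - U)"
      by (rule plus_emeasure[symmetric]) (use Us S in auto)
    ultimately show ?thesis by simp
  qed
  moreover have "emeasure M U = (\<Sum>n. emeasure M (E n))"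
    unfolding U_def by (rule suminf_emeasure[symmetric]) (use Es Ed in auto)
  moreover have "emeasure M (E n) = (if n \<in> Nset M \<beta> then emeasure M (e n \<inter> S) else 0)" for n
    unfolding E_def by simp
  ultimately show ?thesis by simp
qed

lemma TS_val:
  assumes n: "n \<in> Nset M \<beta>" and x: "x \<in> e n"
  shows "TS c x = c n"
proof -
  have "TS c x = (if n \<in> Nset M \<beta> then indicator (e n) x * c n else 0)"
    unfolding TS_def
  proof (rule suminf_if_single)
    fix m assume "m \<noteq> n"
    then show "(if m \<in> Nset M \<beta> then indicator (e m) x * c m else 0) = 0"
      using e_disj[OF n, of m] x by (auto simp: indicator_def)
  qed
  then show ?thesis using n x by simp
qed

lemma TS_meas: "TS c \<in> borel_measurable M"
  unfolding TS_def
proof (rule borel_measurable_suminf_order)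
  fix n
  show "(\<lambda>x. if n \<in> Nset M \<beta> then indicator (e n) x * c n else 0) \<in> borel_measurable M"
  proof (cases "n \<in> Nset M \<beta>")
    case True
    then have "e n \<in> sets M" by (rule e_sets)
    then show ?thesis using True by simp
  qed simp
qed

lemma TS_dst: "dst M (TS c) s = (\<Sum>n. if n \<in> Nset M \<beta> \<and> s < c n then ennreal \<beta> else 0)"
proof -
  have [measurable]: "TS c \<in> borel_measurable M" by (rule TS_meas)
  have S: "{x\<in>space M. s < TS c x} \<in> sets M" by measurable
  have "dst M (TS c) s = (\<Sum>n. if n \<in> Nset M \<beta> then emeasure M (e n \<inter> {x\<in>space M. s < TS c x}) else 0)"
    unfolding dst_def by (rule decomp[OF S])
  also have "\<dots> = (\<Sum>n. if n \<in> Nset M \<beta> \<and> s < c n then ennreal \<beta> else 0)"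
  proof (rule arg_cong[where f=suminf], rule ext)
    fix n
    show "(if n \<in> Nset M \<beta> then emeasure M (e n \<inter> {x\<in>space M. s < TS c x}) else 0)
        = (if n \<in> Nset M \<beta> \<and> s < c n then ennreal \<beta> else 0)"
    proof (cases "n \<in> Nset M \<beta>")
      case True
      have sub: "e n \<subseteq> space M" using e_sets[OF True] sets.sets_into_space by auto
      have "e n \<inter> {x\<in>space M. s < TS c x} = (if s < c n then e n else {})"
        using TS_val[OF True] sub by auto
      then show ?thesis using True e_meas[OF True] by simp
    qed simp
  qed
  finally show ?thesis .
qed

lemma dst_quant:
  assumes f: "f \<in> borel_measurable M"
  shows "quant \<beta> (dst M f s)"
proof -
  have [measurable]: "f \<in> borel_measurable M" by (rule f)
  have S: "{x\<in>space M. s < f x} \<in> sets M" by measurable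
  have "dst M f s = (\<Sum>n. if n \<in> Nset M \<beta> then emeasure M (e n \<inter> {x\<in>space M. s < f x}) else 0)"
    unfolding dst_def by (rule decomp[OF S])
  also have "\<dots> = (\<Sum>n. if n \<in> Nset M \<beta> \<and> emeasure M (e n \<inter> {x\<in>space M. s < f x}) \<noteq> 0 then ennreal \<beta> else 0)"
  proof (rule arg_cong[where f=suminf], rule ext)
    fix n
    show "(if n \<in> Nset M \<beta> then emeasure M (e n \<inter> {x\<in>space M. s < f x}) else 0)
       = (if n \<in> Nset M \<beta> \<and> emeasure M (e n \<inter> {x\<in>space M. s < f x}) \<noteq> 0 then ennreal \<beta> else 0)"
      using atom_dich[OF e_atom S] e_meas by auto
  qed
  finally show ?thesis unfolding quant_def
    using quant_sum[OF b, of "\<lambda>n. n \<in> Nset M \<beta> \<and> emeasure M (e n \<inter> {x\<in>space M. s < f x}) \<noteq> 0"]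
    by simp
qed


definition av :: "(real \<Rightarrow> ennreal) \<Rightarrow> nat \<Rightarrow> ennreal" where
  "av g n = ennreal (1 / \<beta>) * (\<integral>\<^sup>+ t\<in>{\<beta> * real n..\<beta> * real (n + 1)}. g t \<partial>lborel)"

lemma Tatom_TS: "Tatom M \<beta> e F = TS (av (rearr (lebesgue_on (Ival M)) F))"
  unfolding Tatom_def TS_def av_def by (rule refl)

lemma LI_rearr:
  assumes h: "h \<in> borel_measurable N'"
  shows "rearr (lebesgue_on (Ival M)) (\<lambda>t. rearr N' h t * indicator (Ival M) t) t
       = rearr N' h t * indicator {t. ennreal t < emeasure M (space M)} t"
proof -
  let ?F = "\<lambda>t. rearr N' h t * indicator (Ival M) t"
  have [measurable]: "rearr N' h \<in> borel_measurable borel" by (rule rearr_borel[OF h])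
  have Fb: "?F \<in> borel_measurable borel" by measurable
  have FL: "?F \<in> borel_measurable (lebesgue_on (Ival M))" by (rule borel_to_lebesgue_on[OF Fb])
  have d: "dst (lebesgue_on (Ival M)) ?F s = min (dst N' h s) (emeasure M (space M))" for s
  proof -
    have A: "{t \<in> Ival M. s < ?F t} = {t. 0 \<le> t \<and> ennreal t < min (dst N' h s) (emeasure M (space M))}"
      unfolding Ival_def by (rule cut_set) (rule rearr_gt[OF h])
    have "dst (lebesgue_on (Ival M)) ?F s = emeasure (lebesgue_on (Ival M)) {t \<in> Ival M. s < ?F t}"
      unfolding dst_def by simp
    also have "\<dots> = emeasure lborel {t \<in> Ival M. s < ?F t}"
      by (rule emeasure_lebesgue_on_borel) (auto simp: A Ival_borel Ival_def)
    also have "\<dots> = min (dst N' h s) (emeasure M (space M))"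
      unfolding A by (rule emeasure_lborel_ennreal_less)
    finally show ?thesis .
  qed
  show ?thesis by (rule rearr_of_min[OF FL h d])
qed

lemma Xb_at:
  assumes Xb: "Xb = (\<lambda>f. X (Tatom M \<beta> e (\<lambda>t. rearr (lebesgue_on {0..}) f t * indicator (Ival M) t)))"
    and h: "h \<in> borel_measurable (lebesgue_on {0..})"
  shows "Xb h = X (TS (av (\<lambda>t. rearr (lebesgue_on {0..}) h t * indicator {t. ennreal t < emeasure M (space M)} t)))"
proof -
  have "rearr (lebesgue_on (Ival M)) (\<lambda>t. rearr (lebesgue_on {0..}) h t * indicator (Ival M) t)
      = (\<lambda>t. rearr (lebesgue_on {0..}) h t * indicator {t. ennreal t < emeasure M (space M)} t)"
    by (rule ext) (rule LI_rearr[OF h])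
  then show ?thesis unfolding Xb Tatom_TS by simp
qed

lemma av_rearr:
  assumes f: "f \<in> borel_measurable M"
  shows "av (rearr M f) n = rearr M f (\<beta> * real n)"
proof -
  let ?c = "rearr M f (\<beta> * real n)"
  have const: "rearr M f t = ?c" if t: "t \<in> {\<beta> * real n..<\<beta> * real (Suc n)}" for t
  proof (rule ennreal_eq_by_gt)
    fix s
    have "ennreal t < dst M f s \<longleftrightarrow> ennreal (\<beta> * real n) < dst M f s"
      using t by (intro quant_step[OF b dst_quant[OF f]]) auto
    then show "s < rearr M f t \<longleftrightarrow> s < ?c" unfolding rearr_gt[OF f] .
  qed
  have "(\<integral>\<^sup>+ t\<in>{\<beta> * real n..\<beta> * real (n + 1)}. rearr M f t \<partial>lborel)
      = (\<integral>\<^sup>+ t\<in>{\<beta> * real n..<\<beta> * real (Suc n)}. rearr M f t \<partial>lborel)"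
    using closed_open[of "rearr M f" "\<beta> * real n" "\<beta> * real (Suc n)"] by simp
  also have "\<dots> = (\<integral>\<^sup>+ t. ?c * indicator {\<beta> * real n..<\<beta> * real (Suc n)} t \<partial>lborel)"
  proof (rule nn_integral_cong)
    fix t show "rearr M f t * indicator {\<beta> * real n..<\<beta> * real (Suc n)} t = ?c * indicator {\<beta> * real n..<\<beta> * real (Suc n)} t"
      using const[of t] by (cases "t \<in> {\<beta> * real n..<\<beta> * real (Suc n)}") auto
  qed
  also have "\<dots> = ?c * emeasure lborel {\<beta> * real n..<\<beta> * real (Suc n)}"
    by (rule nn_integral_cmult_indicator) simp
  also have "emeasure lborel {\<beta> * real n..<\<beta> * real (Suc n)} = ennreal \<beta>"
    using b by (simp add: algebra_simps)
  finally have I: "(\<integral>\<^sup>+ t\<in>{\<beta> * real n..\<beta> * real (n + 1)}. rearr M f t \<partial>lborel) = ?c * ennreal \<beta>" .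
  have inv: "ennreal (1/\<beta>) * ennreal \<beta> = 1" using b by (simp add: ennreal_mult''[symmetric])
  have "av (rearr M f) n = (ennreal (1/\<beta>) * ennreal \<beta>) * ?c"
    unfolding av_def I by (simp only: mult_ac)
  then show ?thesis unfolding inv by simp
qed

lemma rearr_cut:
  assumes f: "f \<in> borel_measurable M"
  shows "rearr M f t * indicator {t. ennreal t < emeasure M (space M)} t = rearr M f t"
proof (cases "ennreal t < emeasure M (space M)")
  case True then show ?thesis by simp
next
  case False
  have "\<not> 0 < rearr M f t"
  proof
    assume "0 < rearr M f t"
    then have "ennreal t < dst M f 0" unfolding rearr_gt[OF f] .
    also have "\<dots> \<le> emeasure M (space M)" by (rule dst_le_space[OF f])
    finally show False using False by simp
  qed
  then show ?thesis by simp
qed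

lemma key_at:
  assumes ri: "ri_qbfn M X"
    and Xb: "Xb = (\<lambda>f. X (Tatom M \<beta> e (\<lambda>t. rearr (lebesgue_on {0..}) f t * indicator (Ival M) t)))"
    and f: "f \<in> borel_measurable M"
  shows "Xb (rearr M f) = X f"
proof -
  have \<phi>: "rearr M f \<in> borel_measurable (lebesgue_on {0..})" by (rule borel_to_lebesgue_on[OF rearr_borel[OF f]])
  have e1: "(\<lambda>t. rearr (lebesgue_on {0..}) (rearr M f) t * indicator {t. ennreal t < emeasure M (space M)} t) = rearr M f"
    unfolding rearr_rearr[OF f] by (rule ext) (rule rearr_cut[OF f])
  have "Xb (rearr M f) = X (TS (av (rearr M f)))" unfolding Xb_at[OF Xb \<phi>] e1 ..
  also have "\<dots> = X f"
  proof (rule ri_eq[OF ri TS_meas f], rule ext)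
    fix s
    let ?D = "dst M f s"
    have "dst M (TS (av (rearr M f))) s = (\<Sum>n. if n \<in> Nset M \<beta> \<and> s < av (rearr M f) n then ennreal \<beta> else 0)"
      by (rule TS_dst)
    also have "\<dots> = (\<Sum>n. if ennreal (\<beta> * real n) < ?D then ennreal \<beta> else 0)"
    proof (rule arg_cong[where f=suminf], rule ext)
      fix n
      have "n \<in> Nset M \<beta> \<and> s < av (rearr M f) n \<longleftrightarrow> ennreal (\<beta> * real n) < ?D"
      proof -
        have "s < av (rearr M f) n \<longleftrightarrow> ennreal (\<beta> * real n) < ?D"
          unfolding av_rearr[OF f] rearr_gt[OF f] ..
        moreover have "ennreal (\<beta> * real n) < ?D \<Longrightarrow> n \<in> Nset M \<beta>"
          using dst_le_space[OF f, of s] unfolding Nset_def by auto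
        ultimately show ?thesis by blast
      qed
      then show "(if n \<in> Nset M \<beta> \<and> s < av (rearr M f) n then ennreal \<beta> else 0)
          = (if ennreal (\<beta> * real n) < ?D then ennreal \<beta> else 0)" by simp
    qed
    also have "\<dots> = ?D" by (rule quant_sum_ge[OF b dst_quant[OF f]])
    finally show "dst M (TS (av (rearr M f))) s = ?D" .
  qed
  finally show ?thesis .
qed


lemma shift_ind: "indicator {a + c..b + c} (c + x) = (indicator {a..b} (x::real) :: ennreal)"
  by (auto simp: indicator_def)

lemma av_anti:
  assumes g: "g \<in> borel_measurable borel" and anti: "\<And>x y. x \<le> y \<Longrightarrow> g y \<le> g x"
  shows "av g (Suc n) \<le> av g n"
proof -
  have [measurable]: "g \<in> borel_measurable borel" by (rule g)
  have eqI: "{\<beta> * real (Suc n)..\<beta> * real (Suc n + 1)} = {\<beta> * real n + \<beta>..\<beta> * real (n + 1) + \<beta>}"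
    by (simp add: algebra_simps)
  have fm: "(\<lambda>x. g x * indicator {\<beta> * real n + \<beta>..\<beta> * real (n + 1) + \<beta>} x) \<in> borel_measurable borel" by measurable
  have "(\<integral>\<^sup>+ x. g x * indicator {\<beta> * real n + \<beta>..\<beta> * real (n + 1) + \<beta>} x \<partial>lborel)
      = (\<integral>\<^sup>+ x. g (\<beta> + 1 * x) * indicator {\<beta> * real n + \<beta>..\<beta> * real (n + 1) + \<beta>} (\<beta> + 1 * x) \<partial>lborel)"
    using nn_integral_real_affine[OF fm, of 1 \<beta>] by simp
  also have "\<dots> = (\<integral>\<^sup>+ x. g (\<beta> + x) * indicator {\<beta> * real n..\<beta> * real (n + 1)} x \<partial>lborel)"
    unfolding shift_ind by simp
  also have "\<dots> \<le> (\<integral>\<^sup>+ x. g x * indicator {\<beta> * real n..\<beta> * real (n + 1)} x \<partial>lborel)"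
  proof (rule nn_integral_mono)
    fix x
    have "g (\<beta> + x) \<le> g x" using b by (intro anti) simp
    then show "g (\<beta> + x) * indicator {\<beta> * real n..\<beta> * real (n + 1)} x \<le> g x * indicator {\<beta> * real n..\<beta> * real (n + 1)} x"
      by (rule mult_right_mono) simp
  qed
  finally have "(\<integral>\<^sup>+ x\<in>{\<beta> * real (Suc n)..\<beta> * real (Suc n + 1)}. g x \<partial>lborel) \<le> (\<integral>\<^sup>+ x\<in>{\<beta> * real n..\<beta> * real (n + 1)}. g x \<partial>lborel)"
    unfolding eqI .
  then show ?thesis unfolding av_def by (rule mult_left_mono) simp
qed

lemma hb_anti:
  shows "x \<le> y \<Longrightarrow> rearr N' h y * indicator {t. ennreal t < emeasure M (space M)} y
     \<le> rearr N' h x * indicator {t. ennreal t < emeasure M (space M)} x"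
proof -
  assume xy: "x \<le> y"
  have "indicator {t. ennreal t < emeasure M (space M)} y \<le> (indicator {t. ennreal t < emeasure M (space M)} x :: ennreal)"
  proof (cases "ennreal y < emeasure M (space M)")
    case True
    then have "ennreal x < emeasure M (space M)" using ennreal_leI[OF xy] by (rule le_less_trans[rotated])
    then show ?thesis using True by simp
  qed simp
  then show ?thesis by (intro mult_mono rearr_anti xy) auto
qed

lemma hb_borel:
  assumes h: "h \<in> borel_measurable N'"
  shows "(\<lambda>t. rearr N' h t * indicator {t. ennreal t < emeasure M (space M)} t) \<in> borel_measurable borel"
proof -
  have [measurable]: "rearr N' h \<in> borel_measurable borel" by (rule rearr_borel[OF h])
  have [measurable]: "{t::real. ennreal t < emeasure M (space M)} \<in> sets borel" by measurable
  show ?thesis by measurable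
qed

lemma av_zero:
  assumes n: "n \<notin> Nset M \<beta>"
  shows "av (\<lambda>t. rearr N' h t * indicator {t. ennreal t < emeasure M (space M)} t) n = 0"
proof -
  have "(\<lambda>x. rearr N' h x * indicator {t. ennreal t < emeasure M (space M)} x * indicator {\<beta> * real n..\<beta> * real (n + 1)} x) = (\<lambda>x. 0)"
  proof (rule ext)
    fix x
    show "rearr N' h x * indicator {t. ennreal t < emeasure M (space M)} x * indicator {\<beta> * real n..\<beta> * real (n + 1)} x = 0"
    proof (cases "\<beta> * real n \<le> x")
      case True
      have "emeasure M (space M) \<le> ennreal (\<beta> * real n)" using n unfolding Nset_def by simp
      also have "\<dots> \<le> ennreal x" using True by (rule ennreal_leI)
      finally have "\<not> ennreal x < emeasure M (space M)" by simp
      then show ?thesis by simp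
    qed simp
  qed
  then show ?thesis unfolding av_def by simp
qed

lemma rearr_TS_hb:
  assumes h: "h \<in> borel_measurable N'" and t: "0 \<le> t"
  defines "hb \<equiv> (\<lambda>t. rearr N' h t * indicator {t. ennreal t < emeasure M (space M)} t)"
  shows "rearr M (TS (av hb)) t = av hb (nat \<lfloor>t / \<beta>\<rfloor>)"
proof (rule ennreal_eq_by_gt)
  fix s
  have "dst M (TS (av hb)) s = (\<Sum>n. if n \<in> Nset M \<beta> \<and> s < av hb n then ennreal \<beta> else 0)"
    by (rule TS_dst)
  also have "\<dots> = (\<Sum>n. if s < av hb n then ennreal \<beta> else 0)"
    using av_zero[of _ N' h] unfolding hb_def by (intro arg_cong[where f=suminf] ext) auto
  finally have d: "dst M (TS (av hb)) s = (\<Sum>n. if s < av hb n then ennreal \<beta> else 0)" .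
  have P: "s < av hb n" if "s < av hb (Suc n)" for n
  proof -
    have "av hb (Suc n) \<le> av hb n" unfolding hb_def
      by (rule av_anti[OF hb_borel[OF h]]) (rule hb_anti)
    then show ?thesis using that by simp
  qed
  show "s < rearr M (TS (av hb)) t \<longleftrightarrow> s < av hb (nat \<lfloor>t / \<beta>\<rfloor>)"
    unfolding rearr_gt[OF TS_meas] d by (rule sum_down_closed[OF b P t])
qed

lemma Ho_le:
  assumes hk: "hlp_rel L h k" and u: "0 \<le> u"
  shows "(\<integral>\<^sup>+ s\<in>{0..<u}. rearr L h s * indicator {t. ennreal t < emeasure M (space M)} s \<partial>lborel)
      \<le> (\<integral>\<^sup>+ s\<in>{0..<u}. rearr L k s * indicator {t. ennreal t < emeasure M (space M)} s \<partial>lborel)"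
proof (cases "u = 0")
  case True then show ?thesis by simp
next
  case False
  then have "0 < u" using u by simp
  then show ?thesis by (rule HB[OF hk, unfolded closed_open])
qed

lemma hlp_TS:
  assumes h: "h \<in> borel_measurable L" and k: "k \<in> borel_measurable L" and hk: "hlp_rel L h k"
  defines "hb \<equiv> (\<lambda>t. rearr L h t * indicator {t. ennreal t < emeasure M (space M)} t)"
    and "kb \<equiv> (\<lambda>t. rearr L k t * indicator {t. ennreal t < emeasure M (space M)} t)"
  shows "hlp_rel M (TS (av hb)) (TS (av kb))"
  unfolding hlp_rel_def
proof (intro allI impI)
  fix t :: real assume "0 < t"
  then have t: "0 \<le> t" by simp
  define j where "j = nat \<lfloor>t / \<beta>\<rfloor>"
  define l where "l = (t - \<beta> * real j) / \<beta>"
  have fb: "\<beta> * real j \<le> t" "t < \<beta> * real (Suc j)" using floor_bounds[OF b t] unfolding j_def by auto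
  have l: "0 \<le> l" "l \<le> 1" unfolding l_def using b fb by (auto simp: field_simps)
  have formula: "(\<integral>\<^sup>+ s\<in>{0..t}. rearr M (TS (av g)) s \<partial>lborel) =
      (\<integral>\<^sup>+ s\<in>{0..<\<beta> * real j}. g s \<partial>lborel) + ennreal l * (\<integral>\<^sup>+ s\<in>{\<beta> * real j..<\<beta> * real (Suc j)}. g s \<partial>lborel)"
    if g: "g \<in> borel_measurable borel" and R: "\<And>s. 0 \<le> s \<Longrightarrow> rearr M (TS (av g)) s = av g (nat \<lfloor>s / \<beta>\<rfloor>)" for g
    unfolding j_def l_def
    by (rule int_formula[OF b rearr_borel[OF TS_meas] g R _ t], assumption, unfold av_def, rule refl)
  have hbm: "hb \<in> borel_measurable borel" unfolding hb_def by (rule hb_borel[OF h])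
  have kbm: "kb \<in> borel_measurable borel" unfolding kb_def by (rule hb_borel[OF k])
  have Rh: "rearr M (TS (av hb)) s = av hb (nat \<lfloor>s / \<beta>\<rfloor>)" if "0 \<le> s" for s
    unfolding hb_def by (rule rearr_TS_hb[OF h that])
  have Rk: "rearr M (TS (av kb)) s = av kb (nat \<lfloor>s / \<beta>\<rfloor>)" if "0 \<le> s" for s
    unfolding kb_def by (rule rearr_TS_hb[OF k that])
  have bj: "0 \<le> \<beta> * real j" using b by simp
  have bj1: "0 \<le> \<beta> * real (Suc j)" using b by simp
  have x: "(\<integral>\<^sup>+ s\<in>{0..<\<beta> * real j}. hb s \<partial>lborel) \<le> (\<integral>\<^sup>+ s\<in>{0..<\<beta> * real j}. kb s \<partial>lborel)"
    unfolding hb_def kb_def by (rule Ho_le[OF hk bj])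
  have split: "(\<integral>\<^sup>+ s\<in>{0..<\<beta> * real (Suc j)}. g s \<partial>lborel) =
      (\<integral>\<^sup>+ s\<in>{0..<\<beta> * real j}. g s \<partial>lborel) + (\<integral>\<^sup>+ s\<in>{\<beta> * real j..<\<beta> * real (Suc j)}. g s \<partial>lborel)"
    if g: "g \<in> borel_measurable borel" for g
    unfolding split_sum[OF b g, of "Suc j"] split_sum[OF b g, of j] by simp
  have xp: "(\<integral>\<^sup>+ s\<in>{0..<\<beta> * real j}. hb s \<partial>lborel) + (\<integral>\<^sup>+ s\<in>{\<beta> * real j..<\<beta> * real (Suc j)}. hb s \<partial>lborel)
      \<le> (\<integral>\<^sup>+ s\<in>{0..<\<beta> * real j}. kb s \<partial>lborel) + (\<integral>\<^sup>+ s\<in>{\<beta> * real j..<\<beta> * real (Suc j)}. kb s \<partial>lborel)"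
    unfolding split[OF hbm, symmetric] split[OF kbm, symmetric] unfolding hb_def kb_def by (rule Ho_le[OF hk bj1])
  show "(\<integral>\<^sup>+ s\<in>{0..t}. rearr M (TS (av hb)) s \<partial>lborel) \<le> (\<integral>\<^sup>+ s\<in>{0..t}. rearr M (TS (av kb)) s \<partial>lborel)"
  proof -
    have "(\<integral>\<^sup>+ s\<in>{0..t}. rearr M (TS (av hb)) s \<partial>lborel) =
      (\<integral>\<^sup>+ s\<in>{0..<\<beta> * real j}. hb s \<partial>lborel) + ennreal l * (\<integral>\<^sup>+ s\<in>{\<beta> * real j..<\<beta> * real (Suc j)}. hb s \<partial>lborel)"
      by (rule formula[OF hbm Rh])
    also have "\<dots> \<le> (\<integral>\<^sup>+ s\<in>{0..<\<beta> * real j}. kb s \<partial>lborel) + ennreal l * (\<integral>\<^sup>+ s\<in>{\<beta> * real j..<\<beta> * real (Suc j)}. kb s \<partial>lborel)"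
      by (rule convex_ennreal[OF l x xp])
    also have "\<dots> = (\<integral>\<^sup>+ s\<in>{0..t}. rearr M (TS (av kb)) s \<partial>lborel)"
      by (rule formula[OF kbm Rk, symmetric])
    finally show ?thesis .
  qed
qed

lemma AT_case:
  fixes Xb :: "(real \<Rightarrow> ennreal) \<Rightarrow> ennreal"
  assumes ri: "ri_qbfn M X"
    and Xb: "Xb = (\<lambda>f. X (Tatom M \<beta> e (\<lambda>t. rearr (lebesgue_on {0..}) f t * indicator (Ival M) t)))"
  shows "HLP_principle M X \<longleftrightarrow> HLP_principle (lebesgue_on {0..}) Xb"
proof
  let ?L = "lebesgue_on {0..} :: real measure"
  let ?J = "{t. ennreal t < emeasure M (space M)}"
  assume H: "HLP_principle M X"
  show "HLP_principle ?L Xb"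
    unfolding HLP_principle_def
  proof (intro ballI impI)
    fix h k assume h: "h \<in> borel_measurable ?L" and k: "k \<in> borel_measurable ?L" and hk: "hlp_rel ?L h k"
    have "hlp_rel M (TS (av (\<lambda>t. rearr ?L h t * indicator ?J t))) (TS (av (\<lambda>t. rearr ?L k t * indicator ?J t)))"
      by (rule hlp_TS[OF h k hk])
    then have "X (TS (av (\<lambda>t. rearr ?L h t * indicator ?J t))) \<le> X (TS (av (\<lambda>t. rearr ?L k t * indicator ?J t)))"
      using H TS_meas unfolding HLP_principle_def by blast
    then show "Xb h \<le> Xb k" unfolding Xb_at[OF Xb h] Xb_at[OF Xb k] .
  qed
next
  let ?L = "lebesgue_on {0..} :: real measure"
  assume H: "HLP_principle ?L Xb"
  show "HLP_principle M X"
    unfolding HLP_principle_def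
  proof (intro ballI impI)
    fix f g assume f: "f \<in> borel_measurable M" and g: "g \<in> borel_measurable M" and fg: "hlp_rel M f g"
    have "Xb (rearr M f) \<le> Xb (rearr M g)"
      using H hlp_rearr[OF f g fg] borel_to_lebesgue_on[OF rearr_borel[OF f]] borel_to_lebesgue_on[OF rearr_borel[OF g]]
      unfolding HLP_principle_def by blast
    then show "X f \<le> X g" using key_at[OF ri Xb f] key_at[OF ri Xb g] by simp
  qed
qed

end

theorem mainTheorem4:
  fixes M :: "'a measure"
    and X :: "('a \<Rightarrow> ennreal) \<Rightarrow> ennreal"
    and Xb :: "(real \<Rightarrow> ennreal) \<Rightarrow> ennreal"
  assumes "sigma_finite_measure M"
    and "resonant M"
    and "ri_qbfn M X"
    and "is_Xbar M X Xb"
  shows "HLP_principle M X \<longleftrightarrow> HLP_principle (lebesgue_on {0..}) Xb"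
  using assms(4) unfolding is_Xbar_def
proof (elim disjE conjE exE)
  fix \<sigma> assume "\<sigma> \<in> M \<rightarrow>\<^sub>M restrict_space lborel (Ival M)"
    "distr M (restrict_space lborel (Ival M)) \<sigma> = restrict_space lborel (Ival M)"
    "Xb = (\<lambda>f. X ((\<lambda>t. rearr (lebesgue_on {0..}) f t * indicator (Ival M) t) \<circ> \<sigma>))"
  then show ?thesis by (intro NA_case[OF assms(3)])
next
  fix \<beta> e assume "0 < \<beta>" "\<forall>A. atom M A \<longrightarrow> emeasure M A = ennreal \<beta>" "atom_enum M \<beta> e"
    "Xb = (\<lambda>f. X (Tatom M \<beta> e (\<lambda>t. rearr (lebesgue_on {0..}) f t * indicator (Ival M) t)))"
  then show ?thesis by (intro AT_case[OF _ _ _ assms(3)])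
qed

end
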